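(* Let $q$ be an odd prime power, $c\in\mathbb{F}_q^*$, $f(X)=X(X^{q-1}-c)^{q+1}$ on $\mathbb{F}_{q^2}$, with $a,\beta,g$ as in the context. For $L_{[u:v]}\in\mathbb{P}^1$ we have $g(u,v)=0$ if and only if ($c=1$ and $v=0$) or ($c=-1$ and $u=0$). Moreover, for each $L_{[u:v]}\in\mathbb{P}^1$ with $g(u,v)\neq0$, the set $L_{[u:v]}\setminus\{0\}$ is the union of exactly $\frac{q-1}{d}$ cycles of length $d$ in $\mathcal{G}(f)$, where $d$ is the multiplicative order of $g(u,v)$ in $\mathbb{F}_q^*$.
   Context: $a\in\mathbb{F}_q^*$ is a non-square in $\mathbb{F}_q$, $\beta\in\mathbb{F}_{q^2}$ with $\beta^2=a$; every element of $\mathbb{F}_{q^2}$ is uniquely $x+y\beta$, $x,y\in\mathbb{F}_q$. For $(x,y)\neq(0,0)$, $g(x,y)=\frac{(1-c)^2x^2-(1+c)^2y^2a}{x^2-y^2a}\in\mathbb{F}_q$; it satisfies $g(\lambda x,\lambda y)=g(x,y)$ for $\lambda\in\mathbb{F}_q^*$. For $(u,v)\in\mathbb{F}_q^2\setminus\{(0,0)\}$, $L_{[u:v]}=\{\lambda(u+v\beta):\lambda\in\mathbb{F}_q\}$, and $\mathbb{P}^1$ is the set of these $q+1$ lines ($L_{[u:v]}=L_{[u':v']}$ iff $(u',v')$ is a nonzero scalar multiple of $(u,v)$). $\mathcal{G}(f)$ is the functional graph (vertices $\mathbb{F}_{q^2}$, edges $\langle x,f(x)\rangle$); a cycle of length $n$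 consists of distinct $\alpha,f(\alpha),\dots,f^{(n-1)}(\alpha)$ with $f^{(n)}(\alpha)=\alpha$. *)

theory Defs
  imports "HOL-Computational_Algebra.Primes"
begin

text \<open>The ambient field F_{q^2} is a finite field type 'a with CARD('a) = q^2;
  its subfield F_q is the set of roots of X^q - X.\<close>
definition subfield_q :: "nat \<Rightarrow> 'a::{finite,field} set" where
  "subfield_q q = {x. x ^ q = x}"

definition prime_power :: "nat \<Rightarrow> bool" where
  "prime_power q \<longleftrightarrow> (\<exists>p k. prime p \<and> 0 < k \<and> q = p ^ k)"

definition gfun :: "'a::field \<Rightarrow> 'a \<Rightarrow> 'a \<Rightarrow> 'a \<Rightarrow> 'a" where
  "gfun c a x y = ((1 - c)^2 * x^2 - (1 + c)^2 * y^2 * a) / (x^2 - y^2 * a)"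

definition fmap :: "nat \<Rightarrow> 'a::field \<Rightarrow> 'a \<Rightarrow> 'a" where
  "fmap q c X = X * (X ^ (q - 1) - c) ^ (q + 1)"

definition line :: "nat \<Rightarrow> 'a::{finite,field} \<Rightarrow> 'a \<Rightarrow> 'a \<Rightarrow> 'a set" where
  "line q \<beta> u v = {l * (u + v * \<beta>) | l. l \<in> subfield_q q}"

definition mult_order :: "'a::field \<Rightarrow> nat" where
  "mult_order x = (LEAST n. 0 < n \<and> x ^ n = 1)"

definition is_cycle :: "('a \<Rightarrow> 'a) \<Rightarrow> nat \<Rightarrow> 'a set \<Rightarrow> bool" where
  "is_cycle f n C \<longleftrightarrow> 0 < n \<and> (\<exists>\<alpha>. C = (\<lambda>i. (f ^^ i) \<alpha>) ` {..<n}
      \<and> inj_on (\<lambda>i. (f ^^ i) \<alpha>) {..<n} \<and> (f ^^ n) \<alpha> = \<alpha>)"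

end

theory Submission imports Defs "HOL-Number_Theory.Residues" begin

lemma power_card_same:
  fixes x :: "'a::{finite,field}"
  shows "x ^ card (UNIV :: 'a set) = x"
proof (cases "x = 0")
  case False
  have "x * (\<Prod>y\<in>UNIV-{0}. x * y) = x * x ^ (card (UNIV :: 'a set) - 1) * \<Prod>(UNIV-{0})"
    by (simp add: prod.distrib mult_ac)
  also have "x * x ^ (card (UNIV :: 'a set) - 1) = x ^ Suc (card (UNIV :: 'a set) - 1)"
    by (subst power_Suc) auto
  also have "Suc (card (UNIV :: 'a set) - 1) = card (UNIV :: 'a set)"
    using finite_UNIV_card_ge_0[where ?'a = 'a] by simp
  also have "(\<Prod>y\<in>UNIV-{0}. x * y) = (\<Prod>y\<in>UNIV-{0}. y)"
    by (rule prod.reindex_bij_witness[of _ "\<lambda>y. y / x" "\<lambda>y. x * y"]) (use False in auto)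
  finally show ?thesis
    by simp
qed (use finite_UNIV_card_ge_0[where ?'a = 'a] in auto)

lemma mo_props:
  fixes g :: "'a::field"
  assumes m: "0 < m" "g ^ m = 1"
  shows "0 < mult_order g" "g ^ mult_order g = 1"
    "\<And>n. 0 < n \<Longrightarrow> n < mult_order g \<Longrightarrow> g ^ n \<noteq> 1"
    "mult_order g dvd m"
proof -
  have ex: "0 < m \<and> g ^ m = 1" using m by simp
  show A: "0 < mult_order g" "g ^ mult_order g = 1"
    using LeastI[of "\<lambda>n. 0 < n \<and> g ^ n = 1", OF ex] unfolding mult_order_def by auto
  show B: "\<And>n. 0 < n \<Longrightarrow> n < mult_order g \<Longrightarrow> g ^ n \<noteq> 1"
    using not_less_Least unfolding mult_order_def by blast
  let ?d = "mult_order g"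
  have "g ^ m = g ^ (?d * (m div ?d) + m mod ?d)" by simp
  also have "\<dots> = (g ^ ?d) ^ (m div ?d) * g ^ (m mod ?d)" by (simp only: power_add power_mult)
  finally have "g ^ m = (g ^ ?d) ^ (m div ?d) * g ^ (m mod ?d)" .
  hence "g ^ (m mod ?d) = 1" using A m by simp
  moreover have "m mod ?d < ?d" using A(1) by simp
  ultimately have "m mod ?d = 0" using B[of "m mod ?d"] by blast
  thus "mult_order g dvd m" by auto
qed

lemma pow_mod:
  fixes g :: "'a::field"
  assumes "g ^ d = 1"
  shows "g ^ n = g ^ (n mod d)"
proof -
  have "g ^ n = g ^ (d * (n div d) + n mod d)" by simp
  also have "\<dots> = (g ^ d) ^ (n div d) * g ^ (n mod d)" by (simp only: power_add power_mult)
  finally have "g ^ n = (g ^ d) ^ (n div d) * g ^ (n mod d)" .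
  thus ?thesis using assms by simp
qed

locale ctx5 =
  fixes q :: nat and c a \<beta> :: "'a::{finite,field}"
  assumes pp: "prime_power q" and oq: "odd q"
    and cardq: "card (UNIV :: 'a set) = q ^ 2"
    and cK: "c \<in> subfield_q q" and c0: "c \<noteq> 0"
    and aK: "a \<in> subfield_q q" and a0: "a \<noteq> 0"
    and nsq: "\<not> (\<exists>z \<in> subfield_q q. z ^ 2 = a)"
    and beta: "\<beta> ^ 2 = a"
begin

abbreviation "K \<equiv> (subfield_q q :: 'a set)"

lemma char_facts: "prime CHAR('a) \<and> (\<exists>k. q = CHAR('a) ^ k)"
proof -
  obtain p k where p: "prime p" "0 < k" "q = p ^ k" using pp unfolding prime_power_def by blast
  have cp: "prime CHAR('a)"
    by (rule prime_CHAR_semidom) (rule finite_imp_CHAR_pos, simp)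
  have "CHAR('a) dvd p ^ (k * 2)" using CHAR_dvd_CARD[where 'a='a] cardq p
    by (simp add: power_mult)
  hence "CHAR('a) dvd p" using cp prime_dvd_power by blast
  hence "CHAR('a) = p" using cp p(1) primes_dvd_imp_eq by blast
  thus ?thesis using cp p by auto
qed

lemma frob_add: "(x + y :: 'a) ^ q = x ^ q + y ^ q"
  using char_facts freshmans_dream' by blast

lemma q_pos: "q > 0" using oq by (cases q) auto

lemma frob_neg: "(- x :: 'a) ^ q = - (x ^ q)"
proof -
  have "0 = (x + - x) ^ q" using q_pos by simp
  also have "\<dots> = x ^ q + (-x) ^ q" by (rule frob_add)
  finally show ?thesis by (simp add: eq_neg_iff_add_eq_0 add.commute)
qed

lemma frob_diff: "(x - y :: 'a) ^ q = x ^ q - y ^ q"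
  using frob_add[of x "-y"] frob_neg[of y] by simp

lemma q_gt1: "q > 1"
proof -
  obtain p k where p: "prime p" "0 < k" "q = p ^ k" using pp unfolding prime_power_def by blast
  have "p > 1" using p(1) prime_gt_1_nat by blast
  thus ?thesis using p one_less_power by blast
qed

lemma two_ne0: "(2::'a) \<noteq> 0"
proof
  assume "(2::'a) = 0"
  hence "CHAR('a) dvd 2" using of_nat_eq_0_iff_char_dvd[of 2, where 'a='a] by simp
  moreover obtain k where "q = CHAR('a) ^ k" using char_facts by blast
  moreover have "k > 0" using calculation q_gt1 by (cases k) auto
  moreover have "CHAR('a) = 2" using calculation(1) char_facts
    using primes_dvd_imp_eq two_is_prime_nat by blast
  ultimately have "even q" by simp
  thus False using oq by simp
qed

lemma four_ne0: "(4::'a) \<noteq> 0"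
proof -
  have "(4::'a) = 2 * 2" by simp
  thus ?thesis using two_ne0 by (metis mult_eq_0_iff)
qed

lemma K_mult: "x \<in> K \<Longrightarrow> y \<in> K \<Longrightarrow> x * y \<in> K"
  by (simp add: subfield_q_def power_mult_distrib)
lemma K_add: "x \<in> K \<Longrightarrow> y \<in> K \<Longrightarrow> x + y \<in> K"
  by (simp add: subfield_q_def frob_add)
lemma K_diff: "x \<in> K \<Longrightarrow> y \<in> K \<Longrightarrow> x - y \<in> K"
  by (simp add: subfield_q_def frob_diff)
lemma K_div: "x \<in> K \<Longrightarrow> y \<in> K \<Longrightarrow> x / y \<in> K"
  by (simp add: subfield_q_def power_divide)
lemma K_pow: "x \<in> K \<Longrightarrow> x ^ n \<in> K"
proof -
  assume "x \<in> K"
  hence "x ^ q = x" by (simp add: subfield_q_def)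
  have "(x ^ n) ^ q = (x ^ q) ^ n" by (simp add: power_mult[symmetric] mult.commute)
  thus ?thesis using \<open>x ^ q = x\<close> by (simp add: subfield_q_def)
qed
lemma K_1: "1 \<in> K" by (simp add: subfield_q_def)
lemma K_0: "0 \<in> K" using q_pos by (simp add: subfield_q_def)
lemma K_num2: "2 \<in> K" using K_add[OF K_1 K_1] by simp

lemma beta_notK: "\<beta> \<notin> K" using nsq beta by blast

lemma beta_ne0: "\<beta> \<noteq> 0" using beta a0 by auto

lemma beta_q: "\<beta> ^ q = - \<beta>"
proof -
  have "(\<beta> ^ q) ^ 2 = (\<beta> ^ 2) ^ q" by (simp add: power_mult[symmetric] mult.commute)
  hence "(\<beta> ^ q) ^ 2 = \<beta> ^ 2" using aK beta by (simp add: subfield_q_def)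
  hence "(\<beta> ^ q - \<beta>) * (\<beta> ^ q + \<beta>) = 0" by (simp add: algebra_simps power2_eq_square)
  moreover have "\<beta> ^ q \<noteq> \<beta>" using beta_notK by (simp add: subfield_q_def)
  ultimately show ?thesis by (simp add: eq_neg_iff_add_eq_0)
qed

lemma pow_qq: "((x::'a) ^ q) ^ q = x"
proof -
  have "(x ^ q) ^ q = x ^ (q ^ 2)" by (simp add: power_mult[symmetric] power2_eq_square)
  thus ?thesis using power_card_same[of x] cardq by simp
qed

lemma two_q: "(2::'a) ^ q = 2" using K_num2 by (simp add: subfield_q_def)

lemma card_K: "card K = q"
proof -
  let ?F = "\<lambda>(s,t). s + t * \<beta>"
  have "bij_betw ?F (K \<times> K) UNIV"
  proof (rule bij_betw_imageI)
    show "inj_on ?F (K \<times> K)"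
    proof (rule inj_onI, clarsimp)
      fix s t s' t' assume h: "s \<in> K" "t \<in> K" "s' \<in> K" "t' \<in> K" "s + t * \<beta> = s' + t' * \<beta>"
      show "s = s' \<and> t = t'"
      proof (cases "t = t'")
        case True thus ?thesis using h by simp
      next
        case False
        hence "\<beta> = (s' - s) / (t - t')" using h(5) by (simp add: field_simps)
        hence "\<beta> \<in> K" using h K_div K_diff by simp
        thus ?thesis using beta_notK by simp
      qed
    qed
    show "?F ` (K \<times> K) = UNIV"
    proof -
     have "\<exists>s\<in>K. \<exists>t\<in>K. x = s + t * \<beta>" for x :: 'a
     proof -
      define s where "s = (x + x ^ q) / 2"
      define t where "t = (x - x ^ q) / (2 * \<beta>)"
      have "s \<in> K" unfolding s_def subfield_q_def
        by (simp add: power_divide frob_add pow_qq two_q add.commute)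
      moreover have "t \<in> K" unfolding t_def subfield_q_def
        using beta_ne0 two_ne0 four_ne0
        by (simp add: power_divide frob_diff pow_qq two_q beta_q power_mult_distrib field_simps)
      moreover have "x = s + t * \<beta>" unfolding s_def t_def using beta_ne0 two_ne0 four_ne0 four_ne0
        by (simp add: field_simps)
      ultimately show "\<exists>s\<in>K. \<exists>t\<in>K. x = s + t * \<beta>" by blast
     qed
     thus ?thesis by (force simp: image_iff)
    qed
  qed
  hence "card (K \<times> K) = q ^ 2" using cardq bij_betw_same_card by metis
  hence "card K ^ Suc 1 = q ^ Suc 1" by (simp add: card_cartesian_product power2_eq_square)
  thus ?thesis using power_inject_base by blast
qed

lemma c_q: "c ^ q = c" using cK by (simp add: subfield_q_def)

context
  fixes u v :: 'a
  assumes uK: "u \<in> K" and vK: "v \<in> K" and uv: "(u, v) \<noteq> (0, 0)"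
begin

lemma w_ne0: "u + v * \<beta> \<noteq> 0"
proof
  assume h: "u + v * \<beta> = 0"
  show False
  proof (cases "v = 0")
    case True thus False using h uv by simp
  next
    case False
    hence "\<beta> = - u / v" using h by (simp add: field_simps add_eq_0_iff)
    moreover have "(0 - u) / v \<in> K" using K_div[OF K_diff[OF K_0 uK] vK] .
    ultimately have "\<beta> \<in> K" by simp
    thus False using beta_notK by simp
  qed
qed

lemma w'_ne0: "u - v * \<beta> \<noteq> 0"
proof
  assume h: "u - v * \<beta> = 0"
  show False
  proof (cases "v = 0")
    case True thus False using h uv by simp
  next
    case False
    hence "\<beta> = u / v" using h by (simp add: field_simps)
    hence "\<beta> \<in> K" using K_div uK vK by simp
    thus False using beta_notK by simp
  qed
qed

lemma ww': "(u + v * \<beta>) * (u - v * \<beta>) = u^2 - v^2 * a"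
  using beta by (simp add: algebra_simps power2_eq_square)

lemma D_ne0: "u^2 - v^2 * a \<noteq> 0"
  using ww' w_ne0 w'_ne0 by (metis mult_eq_0_iff)

lemma w_q: "(u + v * \<beta>) ^ q = u - v * \<beta>"
  using uK vK by (simp add: frob_add power_mult_distrib beta_q subfield_q_def)

lemma w'_q: "(u - v * \<beta>) ^ q = u + v * \<beta>"
  using uK vK by (simp add: frob_diff power_mult_distrib beta_q subfield_q_def)

lemma g_K: "gfun c a u v \<in> K"
  unfolding gfun_def
  by (intro K_div K_diff K_mult K_pow uK vK aK cK K_add K_1)

lemma f_line: 
  assumes lK: "l \<in> K"
  shows "fmap q c (l * (u + v * \<beta>)) = gfun c a u v * (l * (u + v * \<beta>))"
proof (cases "l = 0")
  case True thus ?thesis by (simp add: fmap_def)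
next
  case False
  define w where "w = u + v * \<beta>"
  define w' where "w' = u - v * \<beta>"
  have wn: "w \<noteq> 0" "w' \<noteq> 0" using w_ne0 w'_ne0 w_def w'_def by auto
  have lq: "l ^ q = l" using lK by (simp add: subfield_q_def)
  define x where "x = l * w"
  have xn: "x \<noteq> 0" using False wn x_def by simp
  have xq: "x ^ q = l * w'" using lq w_q by (simp add: x_def w_def w'_def power_mult_distrib)
  have "x ^ q = x ^ (q - 1) * x" using q_pos by (simp add: power_Suc2[symmetric])
  hence x1: "x ^ (q - 1) = w' / w" using xq xn False wn by (simp add: x_def field_simps)
  define y where "y = x ^ (q - 1) - c"
  have yq: "y ^ q = w / w' - c"
  proof -
    have "(w'/w)^q = w/w'" using w_q w'_q w_def w'_def by (simp add: power_divide)
    thus ?thesis unfolding y_def x1 by (simp add: frob_diff c_q)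
  qed
  have "y ^ (q + 1) = y ^ q * y" by simp
  also have "\<dots> = (w/w' - c) * (w'/w - c)" using yq x1 y_def by simp
  also have "\<dots> = (w - c * w') * (w' - c * w) / (w * w')"
    using wn by (simp add: field_simps)
  also have "(w - c * w') * (w' - c * w) = (1 - c)^2 * u^2 - (1 + c)^2 * v^2 * a"
    unfolding w_def w'_def beta[symmetric] by (simp add: algebra_simps power2_eq_square)
  also have "w * w' = u^2 - v^2 * a" using ww' w_def w'_def by simp
  finally have "y ^ (q + 1) = gfun c a u v" by (simp add: gfun_def)
  thus ?thesis unfolding fmap_def y_def x_def w_def by (simp add: mult.commute)
qed

lemma g_zero_iff: "gfun c a u v = 0 \<longleftrightarrow> (c = 1 \<and> v = 0) \<or> (c = -1 \<and> u = 0)"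
proof
  assume "gfun c a u v = 0"
  hence N: "(1 - c)^2 * u^2 = (1 + c)^2 * v^2 * a" using D_ne0 by (simp add: gfun_def)
  show "(c = 1 \<and> v = 0) \<or> (c = -1 \<and> u = 0)"
  proof (cases "v = 0")
    case True
    hence "u \<noteq> 0" using uv by simp
    thus ?thesis using N True by simp
  next
    case False
    have "1 + c = 0"
    proof (rule ccontr)
      assume h: "1 + c \<noteq> 0"
      define z where "z = (1 - c) * u / ((1 + c) * v)"
      have "z \<in> K" unfolding z_def by (intro K_div K_mult K_diff K_add K_1 cK uK vK)
      moreover have "z ^ 2 = a"
      proof -
        have "((1+c)*v)^2 \<noteq> 0" using h False by simp
        moreover have "((1-c)*u)^2 = a * ((1+c)*v)^2" using N by (simp add: power_mult_distrib mult_ac)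
        ultimately show ?thesis unfolding z_def by (simp add: power_divide divide_eq_eq)
      qed
      ultimately show False using nsq by blast
    qed
    hence c: "c = -1" by (simp add: add_eq_0_iff)
    hence "4 * u^2 = 0" using N by simp
    hence "u = 0" using four_ne0 by simp
    thus ?thesis using c by simp
  qed
next
  assume "(c = 1 \<and> v = 0) \<or> (c = -1 \<and> u = 0)"
  thus "gfun c a u v = 0" by (auto simp: gfun_def)
qed

lemma cycles:
  assumes gn: "gfun c a u v \<noteq> 0"
  shows "\<exists>S. finite S \<and> (\<forall>C \<in> S. is_cycle (fmap q c) (mult_order (gfun c a u v)) C)
                 \<and> \<Union>S = line q \<beta> u v - {0}
                 \<and> card S = (q - 1) div mult_order (gfun c a u v)"
proof -
  define g where "g = gfun c a u v"
  define d where "d = mult_order g"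
  define w where "w = u + v * \<beta>"
  have gK: "g \<in> K" using g_K g_def by simp
  have g0: "g \<noteq> 0" using gn g_def by simp
  have gq1: "g ^ (q - 1) = 1"
  proof -
    have "g ^ (q - 1) * g = g" using gK q_pos by (simp add: subfield_q_def power_Suc2[symmetric])
    thus ?thesis using g0 by simp
  qed
  have qm: "0 < q - 1" using q_gt1 by simp
  note mo = mo_props[OF qm gq1, folded d_def]
  have dpos: "0 < d" and gd: "g ^ d = 1" and dmin: "\<And>n. 0 < n \<Longrightarrow> n < d \<Longrightarrow> g ^ n \<noteq> 1"
    and ddvd: "d dvd q - 1" using mo by auto
  have wn: "w \<noteq> 0" using w_ne0 w_def by simp
  have ginj: "i = j" if "i < d" "j < d" "g ^ i = g ^ j" for i j
  proof (rule ccontr)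
    assume "i \<noteq> j"
    then consider "i < j" | "j < i" by linarith
    thus False
    proof cases
      case 1
      have "g ^ j = g ^ i * g ^ (j - i)" using 1 by (simp add: power_add[symmetric])
      hence "g ^ (j - i) = 1" using that(3) g0 by simp
      thus False using dmin[of "j - i"] 1 that by simp
    next
      case 2
      have "g ^ i = g ^ j * g ^ (i - j)" using 2 by (simp add: power_add[symmetric])
      hence "g ^ (i - j) = 1" using that(3) g0 by simp
      thus False using dmin[of "i - j"] 2 that by simp
    qed
  qed
  have iter: "(fmap q c ^^ i) (l * w) = (g ^ i * l) * w" if "l \<in> K" for i l
  proof (induction i)
    case 0 thus ?case by simp
  next
    case (Suc i)
    have "g ^ i * l \<in> K" using K_mult[OF K_pow[OF gK] that] .
    hence "fmap q c ((g ^ i * l) * w) = g * ((g ^ i * l) * w)"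
      using f_line g_def w_def by simp
    thus ?case using Suc by (simp add: mult_ac)
  qed
  define orb where "orb l = (\<lambda>i. (g ^ i * l) * w) ` {..<d}" for l
  have orb_all: "orb l = (\<lambda>i. (g ^ i * l) * w) ` UNIV" for l
  proof -
    have "(\<lambda>i. (g ^ i * l) * w) ` UNIV \<subseteq> orb l"
    proof
      fix x assume "x \<in> (\<lambda>i. (g ^ i * l) * w) ` UNIV"
      then obtain i where "x = (g ^ i * l) * w" by blast
      hence "x = (g ^ (i mod d) * l) * w" using pow_mod[OF gd, of i] by simp
      thus "x \<in> orb l" unfolding orb_def using dpos by auto
    qed
    thus ?thesis unfolding orb_def by auto
  qed
  have orb_card: "card (orb l) = d" if "l \<noteq> 0" for l
  proof -
    have "inj_on (\<lambda>i. (g ^ i * l) * w) {..<d}"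
      by (rule inj_onI) (use that wn ginj in auto)
    thus ?thesis unfolding orb_def by (simp add: card_image)
  qed
  have orb_sub: "orb m \<subseteq> orb l" if "x \<in> orb l" "x \<in> orb m" for l m x
  proof -
    have "x \<in> range (\<lambda>i. g ^ i * l * w)" "x \<in> range (\<lambda>i. g ^ i * m * w)" using that orb_all by auto
    then obtain i j where "x = (g ^ i * l) * w" "x = (g ^ j * m) * w" by blast
    hence e: "g ^ i * l = g ^ j * m" using wn by simp
    have "g ^ j * g ^ ((d - 1) * j) = 1"
    proof -
      have "g ^ j * g ^ ((d - 1) * j) = g ^ (d * j)" using dpos
        by (simp add: power_add[symmetric] algebra_simps)
      also have "\<dots> = 1" using gd by (simp add: power_mult)
      finally show ?thesis .
    qed
    hence mm: "m = g ^ (i + (d - 1) * j) * l"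
      using e by (metis (no_types, lifting) mult.assoc mult.commute mult_1 power_add)
    show ?thesis
    proof
      fix y assume "y \<in> orb m"
      hence "y \<in> range (\<lambda>i. g ^ i * m * w)" using orb_all by auto
      then obtain k where "y = (g ^ k * m) * w" by blast
      hence "y = (g ^ (k + (i + (d - 1) * j)) * l) * w" using mm by (simp add: power_add mult.assoc)
      thus "y \<in> orb l" using orb_all by auto
    qed
  qed
  define S where "S = orb ` (K - {0})"
  have finK: "finite K" by simp
  have "finite S" unfolding S_def by simp
  moreover have "\<forall>C \<in> S. is_cycle (fmap q c) d C"
  proof
    fix C assume "C \<in> S"
    then obtain l where l: "l \<in> K" "l \<noteq> 0" "C = orb l" unfolding S_def by auto
    have e: "(\<lambda>i. (fmap q c ^^ i) (l * w)) ` {..<d} = C" unfolding l orb_def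
      using iter[OF l(1)] by simp
    have "inj_on (\<lambda>i. (fmap q c ^^ i) (l * w)) {..<d}"
      by (rule inj_onI) (use l wn ginj iter[OF l(1)] in auto)
    moreover have "(fmap q c ^^ d) (l * w) = l * w" using iter[OF l(1)] gd by simp
    ultimately show "is_cycle (fmap q c) d C" unfolding is_cycle_def using dpos e by blast
  qed
  moreover have U: "\<Union>S = line q \<beta> u v - {0}"
  proof
    show "\<Union>S \<subseteq> line q \<beta> u v - {0}"
    proof
      fix x assume "x \<in> \<Union>S"
      then obtain l i where l: "l \<in> K" "l \<noteq> 0" "x = (g ^ i * l) * w" unfolding S_def orb_def by auto
      have "g ^ i * l \<in> K" using K_mult[OF K_pow[OF gK] l(1)] .
      moreover have "x \<noteq> 0" using l g0 wn by simp
      ultimately show "x \<in> line q \<beta> u v - {0}" unfolding line_def w_def using l(3) w_def by blast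
    qed
    show "line q \<beta> u v - {0} \<subseteq> \<Union>S"
    proof
      fix x assume "x \<in> line q \<beta> u v - {0}"
      then obtain l where l: "l \<in> K" "x = l * w" "x \<noteq> 0" unfolding line_def w_def by auto
      hence "l \<noteq> 0" by auto
      moreover have "x \<in> orb l" unfolding orb_def using dpos l by force
      ultimately show "x \<in> \<Union>S" unfolding S_def using l by blast
    qed
  qed
  moreover have "card S = (q - 1) div d"
  proof -
    have "d * card S = card (\<Union>S)"
    proof (rule card_partition)
      show "finite S" unfolding S_def by simp
      show "finite (\<Union>S)" by simp
      show "\<And>C. C \<in> S \<Longrightarrow> card C = d" unfolding S_def using orb_card by auto
      show "\<And>c1 c2. c1 \<in> S \<Longrightarrow> c2 \<in> S \<Longrightarrow> c1 \<noteq> c2 \<Longrightarrow> c1 \<inter> c2 = {}"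
        unfolding S_def using orb_sub by blast
    qed
    also have "\<Union>S = (\<lambda>l. l * w) ` (K - {0})"
      unfolding U line_def w_def using w_ne0 by auto
    also have "card \<dots> = card (K - {0})"
      by (rule card_image) (use wn w_ne0 in \<open>auto intro: inj_onI\<close>)
    also have "\<dots> = q - 1" using card_K K_0 by simp
    finally show ?thesis using dpos by (metis nonzero_mult_div_cancel_left not_gr0)
  qed
  ultimately show ?thesis unfolding d_def g_def by blast
qed

end

end
theorem mainTheorem5:
  fixes q :: nat and c a \<beta> :: "'a::{finite,field}"
  assumes "prime_power q" and "odd q"
    and "card (UNIV :: 'a set) = q ^ 2"
    and "c \<in> subfield_q q" and "c \<noteq> 0"
    and "a \<in> subfield_q q" and "a \<noteq> 0"
    and "\<not> (\<exists>z \<in> subfield_q q. z ^ 2 = a)"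
    and "\<beta> ^ 2 = a"
  shows "(\<forall>u \<in> subfield_q q. \<forall>v \<in> subfield_q q. (u, v) \<noteq> (0, 0) \<longrightarrow>
            (gfun c a u v = 0 \<longleftrightarrow> (c = 1 \<and> v = 0) \<or> (c = -1 \<and> u = 0)))
       \<and> (\<forall>u \<in> subfield_q q. \<forall>v \<in> subfield_q q. (u, v) \<noteq> (0, 0) \<longrightarrow>
            gfun c a u v \<noteq> 0 \<longrightarrow>
            (\<exists>S. finite S \<and> (\<forall>C \<in> S. is_cycle (fmap q c) (mult_order (gfun c a u v)) C)
                 \<and> \<Union>S = line q \<beta> u v - {0}
                 \<and> card S = (q - 1) div mult_order (gfun c a u v)))"
proof -
  interpret ctx5 q c a \<beta> using assms by unfold_locales
  show ?thesis
  proof (intro conjI ballI impI)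
    fix u v assume "u \<in> K" "v \<in> K" "(u, v) \<noteq> (0, 0)"
    thus "gfun c a u v = 0 \<longleftrightarrow> (c = 1 \<and> v = 0) \<or> (c = -1 \<and> u = 0)"
      by (rule g_zero_iff)
  next
    fix u v assume "u \<in> K" "v \<in> K" "(u, v) \<noteq> (0, 0)" "gfun c a u v \<noteq> 0"
    thus "\<exists>S. finite S \<and> (\<forall>C \<in> S. is_cycle (fmap q c) (mult_order (gfun c a u v)) C)
                 \<and> \<Union>S = line q \<beta> u v - {0}
                 \<and> card S = (q - 1) div mult_order (gfun c a u v)"
      by (rule cycles)
  qed
qed

end
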